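(* Let $N\ge3$, $\frac{N}{N-1}<p<2$, $\xi=(p-1)(N-1)$, $\beta=\frac{p-1}{\xi-1}$, $\sigma=\frac{2-p}{p-1}$, let $0<R\le\infty$ and $\kappa\in\{p,-p\}$. Suppose $\varphi\in X_1(B_R)$ satisfies \[ L_0^{\kappa}(\varphi):=-\Delta\varphi+\frac{\kappa\, x\cdot\nabla\varphi}{\beta|x|^2}=0\quad\text{in } B_R\setminus\{0\}, \] and, in case $R<\infty$, $\varphi=0$ on $\partial B_R$. Then $\varphi=0$.
   Context: $B_R=\{x\in\mathbb{R}^N:|x|<R\}$ ($B_\infty=\mathbb{R}^N$). $X(B_R)$ is the set of functions $\varphi$ on $B_R\setminus\{0\}$ with $\sup_{0<|x|<R}\{|x|^{\sigma}|\varphi(x)|+|x|^{\sigma+1}|\nabla\varphi(x)|\}<\infty$ (and vanishing on $\partial B_R$ when $R<\infty$); $X_1(B_R)$ is the subspace of $\varphi\in X(B_R)$ with zero spherical averages, i.e. $\int_{S^{N-1}}\varphi(r\theta)\,d\theta=0$ for all $0<r<R$ (equivalently, $\varphi$ has no $k=0$ spherical harmonic mode). *)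

theory Defs
  imports "HOL-Analysis.Analysis" "HOL-Library.Extended_Real"
begin

definition punct_ball :: "ereal \<Rightarrow> 'a::euclidean_space set" where
  "punct_ball R = {x. 0 < norm x \<and> ereal (norm x) < R}"

definition pderiv_dir :: "('a::euclidean_space \<Rightarrow> real) \<Rightarrow> 'a \<Rightarrow> 'a \<Rightarrow> real" where
  "pderiv_dir f b x = frechet_derivative f (at x) b"

definition grad :: "('a::euclidean_space \<Rightarrow> real) \<Rightarrow> 'a \<Rightarrow> 'a" where
  "grad f x = (\<Sum>b\<in>Basis. pderiv_dir f b x *\<^sub>R b)"

definition laplacian :: "('a::euclidean_space \<Rightarrow> real) \<Rightarrow> 'a \<Rightarrow> real" where
  "laplacian f x = (\<Sum>b\<in>Basis. pderiv_dir (pderiv_dir f b) b x)"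

definition C2_on :: "'a::euclidean_space set \<Rightarrow> ('a \<Rightarrow> real) \<Rightarrow> bool" where
  "C2_on D f \<longleftrightarrow>
     (\<forall>x\<in>D. f differentiable (at x) \<and> (\<forall>b\<in>Basis. pderiv_dir f b differentiable (at x))) \<and>
     (\<forall>b\<in>Basis. \<forall>c\<in>Basis. continuous_on D (pderiv_dir (pderiv_dir f b) c))"

definition X_space :: "real \<Rightarrow> ereal \<Rightarrow> ('a::euclidean_space \<Rightarrow> real) \<Rightarrow> bool" where
  "X_space \<sigma> R \<phi> \<longleftrightarrow>
     (\<exists>C. \<forall>x\<in>punct_ball R.
        norm x powr \<sigma> * \<bar>\<phi> x\<bar> + norm x powr (\<sigma> + 1) * norm (grad \<phi> x) \<le> C) \<and>
     (R \<noteq> \<infinity> \<longrightarrow> (\<forall>y. ereal (norm y) = R \<longrightarrow> (\<phi> \<longlongrightarrow> 0) (at y within punct_ball R)))"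

text \<open>Zero spherical averages. The surface integral over S^{N-1} is expressed through the
  cone measure: integral over S^{N-1} of g = N * (Lebesgue integral over B_1 of g(x/|x|)).\<close>
definition zero_sph_avg :: "ereal \<Rightarrow> ('a::euclidean_space \<Rightarrow> real) \<Rightarrow> bool" where
  "zero_sph_avg R \<phi> \<longleftrightarrow>
     (\<forall>r. 0 < r \<and> ereal r < R \<longrightarrow>
        integral (ball 0 1) (\<lambda>x. \<phi> (r *\<^sub>R (x /\<^sub>R norm x))) = 0)"

definition X1_space :: "real \<Rightarrow> ereal \<Rightarrow> ('a::euclidean_space \<Rightarrow> real) \<Rightarrow> bool" where
  "X1_space \<sigma> R \<phi> \<longleftrightarrow> X_space \<sigma> R \<phi> \<and> zero_sph_avg R \<phi>"

end

theory Submission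
  imports Defs
begin

lemma fd_expand:
  fixes f :: "'a::euclidean_space \<Rightarrow> real"
  assumes "f differentiable (at y)"
  shows "frechet_derivative f (at y) v = (\<Sum>c\<in>Basis. (v \<bullet> c) * frechet_derivative f (at y) c)"
proof -
  have lin: "linear (frechet_derivative f (at y))"
    using assms frechet_derivative_works has_derivative_linear by blast
  have "frechet_derivative f (at y) v = frechet_derivative f (at y) (\<Sum>c\<in>Basis. (v \<bullet> c) *\<^sub>R c)"
    by (simp add: euclidean_representation)
  also have "\<dots> = (\<Sum>c\<in>Basis. (v \<bullet> c) * frechet_derivative f (at y) c)"
    using lin by (simp add: linear_sum linear_scale o_def)
  finally show ?thesis .
qed

lemma grad_inner:
  fixes f :: "'a::euclidean_space \<Rightarrow> real"
  assumes "f differentiable (at y)"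
  shows "v \<bullet> grad f y = frechet_derivative f (at y) v"
  unfolding grad_def pderiv_dir_def
  using fd_expand[OF assms, of v] by (simp add: inner_sum_right mult.commute)

lemma second_deriv_max:
  fixes g g1 :: "real \<Rightarrow> real"
  assumes d: "0 < d"
    and D1: "\<And>t. \<bar>t\<bar> < d \<Longrightarrow> (g has_real_derivative g1 t) (at t)"
    and D2: "(g1 has_real_derivative g2) (at 0)"
    and mx: "\<And>t. \<bar>t\<bar> < d \<Longrightarrow> g t \<le> g 0"
  shows "g1 0 = 0 \<and> g2 \<le> 0"
proof -
  have g10: "g1 0 = 0"
    by (rule DERIV_local_max[OF D1[of 0] d]) (use d mx in auto)
  moreover have "g2 \<le> 0"
  proof (rule ccontr)
    assume "\<not> g2 \<le> 0"
    then have "0 < g2" by simp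
    from DERIV_pos_inc_right[OF D2 this] obtain d' where d': "d' > 0"
      "\<And>h. h > 0 \<Longrightarrow> h < d' \<Longrightarrow> g1 0 < g1 (0 + h)" by blast
    define h where "h = min d d' / 2"
    have h: "0 < h" "h < d" "h < d'" using d d' by (auto simp: h_def)
    obtain c where c: "0 < c" "c < h" "g h - g 0 = (h - 0) * g1 c"
      using MVT2[of 0 h g g1] h D1 by force
    have "g1 c > 0" using d'(2)[of c] c h g10 by auto
    then have "g h > g 0" using c h by (simp add: algebra_simps)
    with mx[of h] h show False by auto
  qed
  ultimately show ?thesis by simp
qed

lemma first_dir:
  fixes f :: "'a::euclidean_space \<Rightarrow> real"
  assumes "f differentiable (at (x0 + t *\<^sub>R v))"
  shows "((\<lambda>s. f (x0 + s *\<^sub>R v)) has_real_derivative frechet_derivative f (at (x0 + t *\<^sub>R v)) v) (at t)"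
proof -
  have fd: "(f has_derivative frechet_derivative f (at (x0 + t *\<^sub>R v))) (at (x0 + t *\<^sub>R v))"
    using assms frechet_derivative_works by blast
  have lin: "linear (frechet_derivative f (at (x0 + t *\<^sub>R v)))"
    using fd has_derivative_linear by blast
  have l: "((\<lambda>s. x0 + s *\<^sub>R v) has_derivative (\<lambda>h. h *\<^sub>R v)) (at t)"
    by (auto intro!: derivative_eq_intros)
  have "((\<lambda>s. f (x0 + s *\<^sub>R v)) has_derivative (\<lambda>h. frechet_derivative f (at (x0 + t *\<^sub>R v)) (h *\<^sub>R v))) (at t)"
    using has_derivative_compose[OF l fd] by (simp add: o_def)
  moreover have "(\<lambda>h. frechet_derivative f (at (x0 + t *\<^sub>R v)) (h *\<^sub>R v)) = (*) (frechet_derivative f (at (x0 + t *\<^sub>R v)) v)"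
    using lin by (auto simp: linear_scale fun_eq_iff)
  ultimately show ?thesis unfolding has_field_derivative_def by simp
qed

lemma second_dir:
  fixes f :: "'a::euclidean_space \<Rightarrow> real"
  assumes U: "open U" "y \<in> U"
    and diff: "\<And>x. x \<in> U \<Longrightarrow> f differentiable (at x)"
    and diff2: "\<And>b. b \<in> Basis \<Longrightarrow> pderiv_dir f b differentiable (at y)"
  shows "((\<lambda>t. frechet_derivative f (at (y + t *\<^sub>R v)) v) has_real_derivative
           (\<Sum>c\<in>Basis. (v \<bullet> c) * (\<Sum>d\<in>Basis. (v \<bullet> d) * pderiv_dir (pderiv_dir f c) d y))) (at 0)"
proof -
  define T where "T = {t::real. y + t *\<^sub>R v \<in> U}"
  have T: "open T" "0 \<in> T"
  proof -
    have "open ((\<lambda>t. y + t *\<^sub>R v) -` U)"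
      by (rule continuous_open_vimage[OF U(1)]) (auto intro: continuous_intros)
    then show "open T" "0 \<in> T" using U by (auto simp: T_def vimage_def)
  qed
  have "((\<lambda>t. \<Sum>c\<in>Basis. (v \<bullet> c) * pderiv_dir f c (y + t *\<^sub>R v)) has_real_derivative
           (\<Sum>c\<in>Basis. (v \<bullet> c) * frechet_derivative (pderiv_dir f c) (at (y + 0 *\<^sub>R v)) v)) (at 0)"
    apply (intro DERIV_sum DERIV_cmult first_dir)
    using diff2 by simp
  moreover have "frechet_derivative (pderiv_dir f c) (at y) v = (\<Sum>d\<in>Basis. (v \<bullet> d) * pderiv_dir (pderiv_dir f c) d y)"
    if "c \<in> Basis" for c
    using fd_expand[OF diff2[OF that], of v] by (simp add: pderiv_dir_def)
  ultimately have D: "((\<lambda>t. \<Sum>c\<in>Basis. (v \<bullet> c) * pderiv_dir f c (y + t *\<^sub>R v)) has_real_derivative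
           (\<Sum>c\<in>Basis. (v \<bullet> c) * (\<Sum>d\<in>Basis. (v \<bullet> d) * pderiv_dir (pderiv_dir f c) d y))) (at 0)"
    by simp
  show ?thesis
  proof (rule has_field_derivative_transform_within_open[OF D T])
    fix t assume "t \<in> T"
    then have "f differentiable (at (y + t *\<^sub>R v))" using diff T_def by blast
    then show "(\<Sum>c\<in>Basis. (v \<bullet> c) * pderiv_dir f c (y + t *\<^sub>R v)) = frechet_derivative f (at (y + t *\<^sub>R v)) v"
      using fd_expand[of f "y + t *\<^sub>R v" v] by (simp add: pderiv_dir_def)
  qed
qed

lemma npow_deriv:
  fixes x :: "'a::euclidean_space"
  assumes "x \<noteq> 0"
  shows "((\<lambda>y. norm y powr c) has_derivative (\<lambda>h. c * norm x powr (c - 2) * (x \<bullet> h))) (at x)"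
proof -
  have n: "(norm has_derivative (\<lambda>h. h \<bullet> sgn x)) (at x)"
    using has_derivative_norm[OF assms] by simp
  have c: "((\<lambda>y. c) has_derivative (\<lambda>h. 0)) (at x)" by simp
  have "((\<lambda>y. norm y powr c) has_derivative
     (\<lambda>h. norm x powr c * (0 * ln (norm x) + (h \<bullet> sgn x) * c / norm x))) (at x)"
    using has_derivative_powr[OF n c] assms by simp
  moreover have "(\<lambda>h. norm x powr c * (0 * ln (norm x) + (h \<bullet> sgn x) * c / norm x))
      = (\<lambda>h. c * norm x powr (c - 2) * (x \<bullet> h))"
  proof
    fix h
    have nx: "norm x > 0" using assms by simp
    have "norm x powr (c - 2) = norm x powr c / (norm x)^2"
      using nx by (simp add: powr_diff)
    then show "norm x powr c * (0 * ln (norm x) + (h \<bullet> sgn x) * c / norm x) = c * norm x powr (c - 2) * (x \<bullet> h)"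
      using nx by (simp add: sgn_div_norm inner_commute field_simps power2_eq_square)
  qed
  ultimately show ?thesis by simp
qed

lemma npow_line:
  fixes z v :: "'a::euclidean_space"
  assumes "z + t *\<^sub>R v \<noteq> 0"
  shows "((\<lambda>s. norm (z + s *\<^sub>R v) powr c) has_real_derivative
          c * norm (z + t *\<^sub>R v) powr (c - 2) * ((z + t *\<^sub>R v) \<bullet> v)) (at t)"
proof -
  have l: "((\<lambda>s. z + s *\<^sub>R v) has_derivative (\<lambda>h. h *\<^sub>R v)) (at t)"
    by (auto intro!: derivative_eq_intros)
  show ?thesis
    unfolding has_field_derivative_def
    by (rule has_derivative_eq_rhs[OF has_derivative_compose[OF l npow_deriv[OF assms, of c]]])
       (simp add: fun_eq_iff o_def inner_scaleR_right mult_ac)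
qed

lemma inner_line:
  fixes z v u :: "'a::euclidean_space"
  shows "((\<lambda>s. (z + s *\<^sub>R v) \<bullet> u) has_real_derivative (v \<bullet> u)) (at t)"
  by (auto intro!: derivative_eq_intros simp: inner_add_left)

definition W1 :: "real \<Rightarrow> 'a::euclidean_space \<Rightarrow> 'a \<Rightarrow> 'a \<Rightarrow> 'a \<Rightarrow> real" where
  "W1 a e z v y = a * norm y powr (a - 2) * (y \<bullet> v) * (y \<bullet> e) + norm y powr a * (v \<bullet> e)"

lemma w_d1:
  fixes z v e :: "'a::euclidean_space"
  assumes "z + t *\<^sub>R v \<noteq> 0"
  shows "((\<lambda>s. norm (z + s *\<^sub>R v) powr a * ((z + s *\<^sub>R v) \<bullet> e) + 1) has_real_derivative
          W1 a e z v (z + t *\<^sub>R v)) (at t)"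
proof -
  have "((\<lambda>s. norm (z + s *\<^sub>R v) powr a * ((z + s *\<^sub>R v) \<bullet> e) + 1) has_real_derivative
     (a * norm (z + t *\<^sub>R v) powr (a - 2) * ((z + t *\<^sub>R v) \<bullet> v)) * ((z + t *\<^sub>R v) \<bullet> e)
       + (v \<bullet> e) * norm (z + t *\<^sub>R v) powr a + 0) (at t)"
    by (intro DERIV_add DERIV_mult npow_line[OF assms] inner_line DERIV_const)
  then show ?thesis unfolding W1_def by (rule DERIV_cong) (simp add: algebra_simps)
qed

lemma w_d2:
  fixes z v e :: "'a::euclidean_space"
  assumes "z \<noteq> 0"
  shows "((\<lambda>s. W1 a e z v (z + s *\<^sub>R v)) has_real_derivative
          a * (a - 2) * norm z powr (a - 4) * (z \<bullet> v) * (z \<bullet> v) * (z \<bullet> e)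
          + a * norm z powr (a - 2) * ((v \<bullet> v) * (z \<bullet> e) + 2 * (z \<bullet> v) * (v \<bullet> e))) (at 0)"
proof -
  have z0: "z + 0 *\<^sub>R v \<noteq> 0" using assms by simp
  have "((\<lambda>s. W1 a e z v (z + s *\<^sub>R v)) has_real_derivative
     ((0 * norm (z + 0 *\<^sub>R v) powr (a - 2) + ((a - 2) * norm (z + 0 *\<^sub>R v) powr (a - 2 - 2) * ((z + 0 *\<^sub>R v) \<bullet> v)) * a)
        * ((z + 0 *\<^sub>R v) \<bullet> v) + (v \<bullet> v) * (a * norm (z + 0 *\<^sub>R v) powr (a - 2))) * ((z + 0 *\<^sub>R v) \<bullet> e)
      + (v \<bullet> e) * (a * norm (z + 0 *\<^sub>R v) powr (a - 2) * ((z + 0 *\<^sub>R v) \<bullet> v))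
      + (a * norm (z + 0 *\<^sub>R v) powr (a - 2) * ((z + 0 *\<^sub>R v) \<bullet> v) * (v \<bullet> e) + 0 * norm (z + 0 *\<^sub>R v) powr a)) (at 0)"
    unfolding W1_def
    by (intro DERIV_add DERIV_mult npow_line[OF z0] inner_line DERIV_const)
  then show ?thesis by (rule DERIV_cong) (simp add: algebra_simps diff_diff_eq[symmetric])
qed

definition rfl :: "'a::euclidean_space \<Rightarrow> 'a \<Rightarrow> 'a" where
  "rfl e x = x - (2 * (x \<bullet> e)) *\<^sub>R e"

lemma rfl_rfl: "norm e = 1 \<Longrightarrow> rfl e (rfl e x) = x"
  by (simp add: rfl_def inner_diff_left algebra_simps norm_eq_1 power2_eq_square)

lemma rfl_inner: "rfl e x \<bullet> y = x \<bullet> rfl e y"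
  by (simp add: rfl_def inner_diff_left inner_diff_right inner_commute)

lemma rfl_e: "norm e = 1 \<Longrightarrow> rfl e x \<bullet> e = - (x \<bullet> e)"
  by (simp add: rfl_def inner_diff_left norm_eq_1)

lemma norm_rfl: "norm e = 1 \<Longrightarrow> norm (rfl e x) = norm x"
proof -
  assume e: "norm e = 1"
  have "rfl e x \<bullet> rfl e x = x \<bullet> x"
    using rfl_inner[of e x "rfl e x"] rfl_rfl[OF e] by simp
  then show ?thesis by (simp add: norm_eq_sqrt_inner)
qed

lemma rfl_lin: "rfl e (x + t *\<^sub>R v) = rfl e x + t *\<^sub>R rfl e v"
  by (simp add: rfl_def inner_add_left algebra_simps)

lemma rfl_fix: "x \<bullet> e = 0 \<Longrightarrow> rfl e x = x"
  by (simp add: rfl_def)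

lemma continuous_rfl: "continuous_on S (rfl e)"
  unfolding rfl_def by (intro continuous_intros)

lemma basis_sel:
  fixes F :: "'a::euclidean_space \<Rightarrow> real"
  assumes "b \<in> Basis"
  shows "(\<Sum>c\<in>Basis. (b \<bullet> c) * F c) = F b" "(\<Sum>c\<in>Basis. (c \<bullet> b) * F c) = F b"
proof -
  have "(\<Sum>c\<in>Basis. (b \<bullet> c) * F c) = (\<Sum>c\<in>Basis. if c = b then F b else 0)"
    by (rule sum.cong) (use assms in \<open>auto simp: inner_Basis\<close>)
  then show "(\<Sum>c\<in>Basis. (b \<bullet> c) * F c) = F b" using assms by simp
  have "(\<Sum>c\<in>Basis. (c \<bullet> b) * F c) = (\<Sum>c\<in>Basis. if c = b then F b else 0)"
    by (rule sum.cong) (use assms in \<open>auto simp: inner_Basis\<close>)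
  then show "(\<Sum>c\<in>Basis. (c \<bullet> b) * F c) = F b" using assms by simp
qed

lemma basis_trace:
  fixes H :: "'a::euclidean_space \<Rightarrow> 'a \<Rightarrow> real"
  assumes "b \<in> Basis"
  shows "(\<Sum>c\<in>Basis. (b \<bullet> c) * (\<Sum>d\<in>Basis. (b \<bullet> d) * H c d)) = H b b"
  using assms by (simp add: basis_sel)

lemma trace_rfl:
  fixes H :: "'a::euclidean_space \<Rightarrow> 'a \<Rightarrow> real"
  assumes e: "norm e = 1"
  shows "(\<Sum>b\<in>Basis. \<Sum>c\<in>Basis. (rfl e b \<bullet> c) * (\<Sum>d\<in>Basis. (rfl e b \<bullet> d) * H c d))
         = (\<Sum>c\<in>Basis. H c c)"
proof -
  have "(\<Sum>b\<in>Basis. \<Sum>c\<in>Basis. (rfl e b \<bullet> c) * (\<Sum>d\<in>Basis. (rfl e b \<bullet> d) * H c d))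
      = (\<Sum>b\<in>Basis. \<Sum>c\<in>Basis. \<Sum>d\<in>Basis. ((b \<bullet> rfl e c) * (b \<bullet> rfl e d)) * H c d)"
    by (simp add: sum_distrib_left rfl_inner mult_ac)
  also have "\<dots> = (\<Sum>c\<in>Basis. \<Sum>b\<in>Basis. \<Sum>d\<in>Basis. ((b \<bullet> rfl e c) * (b \<bullet> rfl e d)) * H c d)"
    by (rule sum.swap)
  also have "\<dots> = (\<Sum>c\<in>Basis. \<Sum>d\<in>Basis. \<Sum>b\<in>Basis. ((b \<bullet> rfl e c) * (b \<bullet> rfl e d)) * H c d)"
    by (rule sum.cong[OF refl], rule sum.swap)
  also have "\<dots> = (\<Sum>c\<in>Basis. \<Sum>d\<in>Basis. (\<Sum>b\<in>Basis. (b \<bullet> rfl e c) * (b \<bullet> rfl e d)) * H c d)"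
    by (simp add: sum_distrib_right)
  also have "\<dots> = (\<Sum>c\<in>Basis. \<Sum>d\<in>Basis. (c \<bullet> d) * H c d)"
  proof -
    have "(\<Sum>b\<in>Basis. (b \<bullet> rfl e c) * (b \<bullet> rfl e d)) = c \<bullet> d" for c d
    proof -
      have "(\<Sum>b\<in>Basis. (b \<bullet> rfl e c) * (b \<bullet> rfl e d)) = rfl e c \<bullet> rfl e d"
        by (subst euclidean_inner) (simp add: inner_commute)
      also have "\<dots> = c \<bullet> d" using rfl_inner[of e c "rfl e d"] rfl_rfl[OF e] by simp
      finally show ?thesis .
    qed
    then show ?thesis by simp
  qed
  also have "\<dots> = (\<Sum>c\<in>Basis. H c c)"
    by (simp add: basis_sel)
  finally show ?thesis .
qed

lemma W2_sum:
  fixes z e :: "'a::euclidean_space"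
  assumes "z \<noteq> 0"
  shows "(\<Sum>b\<in>Basis. a * (a - 2) * norm z powr (a - 4) * (z \<bullet> b) * (z \<bullet> b) * (z \<bullet> e)
          + a * norm z powr (a - 2) * ((b \<bullet> b) * (z \<bullet> e) + 2 * (z \<bullet> b) * (b \<bullet> e)))
       = a * (a + real DIM('a)) * norm z powr (a - 2) * (z \<bullet> e)"
proof -
  have r: "norm z > 0" using assms by simp
  have s1: "(\<Sum>b\<in>Basis. (z \<bullet> b) * (z \<bullet> b)) = (norm z)^2"
    using euclidean_inner[of z z] by (simp add: power2_norm_eq_inner)
  have s2: "(\<Sum>b\<in>Basis. (z \<bullet> b) * (b \<bullet> e)) = z \<bullet> e"
    using euclidean_inner[of z e] by (simp add: inner_commute)
  have s3: "(\<Sum>b\<in>(Basis::'a set). b \<bullet> b) = real DIM('a)"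
    by simp
  have p: "norm z powr (a - 4) * (norm z)^2 = norm z powr (a - 2)"
  proof -
    have "norm z powr (a - 4) * (norm z)^2 = norm z powr (a - 4) * norm z powr 2"
      using r by (simp add: powr_realpow)
    also have "\<dots> = norm z powr ((a - 4) + 2)" by (simp only: powr_add)
    also have "\<dots> = norm z powr (a - 2)" by simp
    finally show ?thesis .
  qed
  have "(\<Sum>b\<in>Basis. a * (a - 2) * norm z powr (a - 4) * (z \<bullet> b) * (z \<bullet> b) * (z \<bullet> e)
          + a * norm z powr (a - 2) * ((b \<bullet> b) * (z \<bullet> e) + 2 * (z \<bullet> b) * (b \<bullet> e)))
     = a * (a - 2) * norm z powr (a - 4) * (z \<bullet> e) * (\<Sum>b\<in>Basis. (z \<bullet> b) * (z \<bullet> b))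
       + a * norm z powr (a - 2) * (z \<bullet> e) * (\<Sum>b\<in>(Basis::'a set). b \<bullet> b)
       + 2 * a * norm z powr (a - 2) * (\<Sum>b\<in>Basis. (z \<bullet> b) * (b \<bullet> e))"
  proof -
    let ?K1 = "a * (a - 2) * norm z powr (a - 4) * (z \<bullet> e)"
    let ?K2 = "a * norm z powr (a - 2) * (z \<bullet> e)"
    let ?K3 = "2 * a * norm z powr (a - 2)"
    have "(\<Sum>b\<in>Basis. a * (a - 2) * norm z powr (a - 4) * (z \<bullet> b) * (z \<bullet> b) * (z \<bullet> e)
          + a * norm z powr (a - 2) * ((b \<bullet> b) * (z \<bullet> e) + 2 * (z \<bullet> b) * (b \<bullet> e)))
       = (\<Sum>b\<in>Basis. ?K1 * ((z \<bullet> b) * (z \<bullet> b)) + ?K2 * (b \<bullet> b) + ?K3 * ((z \<bullet> b) * (b \<bullet> e)))"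
      by (rule sum.cong[OF refl]) (simp add: algebra_simps)
    also have "\<dots> = ?K1 * (\<Sum>b\<in>Basis. (z \<bullet> b) * (z \<bullet> b)) + ?K2 * (\<Sum>b\<in>(Basis::'a set). b \<bullet> b)
        + ?K3 * (\<Sum>b\<in>Basis. (z \<bullet> b) * (b \<bullet> e))"
      by (simp only: sum.distrib sum_distrib_left)
    finally show ?thesis by (simp only: mult_ac)
  qed
  also have "\<dots> = a * (a - 2) * (norm z powr (a - 4) * (norm z)^2) * (z \<bullet> e)
       + a * norm z powr (a - 2) * (z \<bullet> e) * real DIM('a)
       + 2 * a * norm z powr (a - 2) * (z \<bullet> e)"
    by (simp only: s1 s2 s3) (simp add: algebra_simps)
  also have "\<dots> = a * (a + real DIM('a)) * norm z powr (a - 2) * (z \<bullet> e)"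
    by (simp only: p) (simp add: algebra_simps)
  finally show ?thesis .
qed

lemma core:
  fixes \<phi> :: "'a::euclidean_space \<Rightarrow> real" and e x0 :: 'a
  assumes U: "open U"
    and diff: "\<And>x. x \<in> U \<Longrightarrow> \<phi> differentiable (at x)"
    and diff2: "\<And>x b. x \<in> U \<Longrightarrow> b \<in> Basis \<Longrightarrow> pderiv_dir \<phi> b differentiable (at x)"
    and eqn: "\<And>x. x \<in> U \<Longrightarrow> laplacian \<phi> x = \<gamma> * (x \<bullet> grad \<phi> x) / (norm x)^2"
    and Urfl: "\<And>x. x \<in> U \<Longrightarrow> rfl e x \<in> U"
    and e: "norm e = 1"
    and eps: "\<epsilon> > 0" and del: "\<delta> > 0"
    and KU: "{x. \<delta> \<le> norm x \<and> norm x \<le> \<rho> \<and> 0 \<le> x \<bullet> e} \<subseteq> U"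
    and Qa: "a * (a + real DIM('a)) - \<gamma> * (a + 1) < 0"
    and inner_bd: "\<And>x. norm x = \<delta> \<Longrightarrow> 0 \<le> x \<bullet> e \<Longrightarrow> \<phi> x - \<phi> (rfl e x) \<le> \<epsilon> * (norm x powr a * (x \<bullet> e))"
    and outer_bd: "\<And>x. norm x = \<rho> \<Longrightarrow> 0 \<le> x \<bullet> e \<Longrightarrow> \<phi> x - \<phi> (rfl e x) \<le> \<epsilon>"
    and x0: "\<delta> \<le> norm x0" "norm x0 \<le> \<rho>" "0 \<le> x0 \<bullet> e"
  shows "\<phi> x0 - \<phi> (rfl e x0) \<le> \<epsilon> * (norm x0 powr a * (x0 \<bullet> e) + 1)"
proof (rule ccontr)
  define K where "K = {x. \<delta> \<le> norm x \<and> norm x \<le> \<rho> \<and> 0 \<le> x \<bullet> e}"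
  define f where "f x = \<phi> x - \<phi> (rfl e x) - \<epsilon> * (norm x powr a * (x \<bullet> e) + 1)" for x
  assume "\<not> ?thesis"
  then have fx0: "f x0 > 0" by (simp add: f_def)
  have x0K: "x0 \<in> K" using x0 by (simp add: K_def)
  have KU': "K \<subseteq> U" using KU by (simp add: K_def)
  have "closed K" unfolding K_def
    by (intro closed_Collect_conj closed_Collect_le continuous_on_const continuous_on_norm_id continuous_on_inner continuous_on_id)
  moreover have "bounded K" unfolding K_def bounded_iff by blast
  ultimately have cK: "compact K" by (simp add: compact_eq_bounded_closed)
  have contphi: "continuous_on U \<phi>"
    using diff by (meson continuous_at_imp_continuous_on differentiable_imp_continuous_within)
  have cf: "continuous_on K f"
  proof -
    have "continuous_on K \<phi>" using contphi KU' continuous_on_subset by blast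
    moreover have "continuous_on K (\<lambda>x. \<phi> (rfl e x))"
      by (rule continuous_on_compose2[OF contphi continuous_rfl]) (use KU' Urfl in auto)
    moreover have "continuous_on K (\<lambda>x. norm x powr a)"
      by (intro continuous_intros) (use del in \<open>auto simp: K_def\<close>)
    ultimately show ?thesis unfolding f_def
      by (intro continuous_intros) (use del in \<open>auto simp: K_def\<close>)
  qed
  obtain z where zK: "z \<in> K" and zmax: "\<And>y. y \<in> K \<Longrightarrow> f y \<le> f z"
    using continuous_attains_sup[OF cK _ cf] x0K by blast
  have fz: "f z > 0" using zmax[OF x0K] fx0 by simp
  have z: "\<delta> \<le> norm z" "norm z \<le> \<rho>" "0 \<le> z \<bullet> e" using zK by (auto simp: K_def)
  have nn: "0 \<le> norm z powr a * (z \<bullet> e)" using z by simp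
  have ze: "z \<bullet> e > 0"
  proof (rule ccontr)
    assume "\<not> z \<bullet> e > 0"
    then have "z \<bullet> e = 0" using z by simp
    then have "f z = - \<epsilon>" by (simp add: f_def rfl_fix)
    then show False using fz eps by simp
  qed
  have zd: "norm z > \<delta>"
  proof (rule ccontr)
    assume "\<not> norm z > \<delta>"
    then have "norm z = \<delta>" using z by simp
    then have "f z \<le> - \<epsilon>" using inner_bd[of z] z by (simp add: f_def algebra_simps)
    then show False using fz eps by simp
  qed
  have zr: "norm z < \<rho>"
  proof (rule ccontr)
    assume "\<not> norm z < \<rho>"
    then have "norm z = \<rho>" using z by simp
    moreover have "\<epsilon> * (norm z powr a * (z \<bullet> e)) \<ge> 0" using eps nn by simp
    ultimately have "f z \<le> 0" using outer_bd[of z] z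
      by (simp add: f_def distrib_left)
    then show False using fz by simp
  qed
  define \<eta> where "\<eta> = min (norm z - \<delta>) (min (\<rho> - norm z) (z \<bullet> e))"
  have eta: "\<eta> > 0" using ze zd zr by (simp add: \<eta>_def)
  have ballK: "y \<in> K" if "norm (y - z) < \<eta>" for y
  proof -
    have "norm z \<le> norm y + norm (y - z)" by (metis norm_triangle_sub add.commute norm_minus_commute)
    moreover have "norm y \<le> norm z + norm (y - z)" by (metis norm_triangle_sub)
    moreover have "\<bar>(y - z) \<bullet> e\<bar> \<le> norm (y - z)" using Cauchy_Schwarz_ineq2[of "y - z" e] e by simp
    ultimately show ?thesis using that by (auto simp: K_def \<eta>_def inner_diff_left)
  qed
  have zU: "z \<in> U" using zK KU' by blast
  have z0: "z \<noteq> 0" using zd del by auto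
  have dirfacts: "(\<phi>' z v - \<phi>' (rfl e z) (rfl e v) - \<epsilon> * W1 a e z v z = 0) \<and>
     ((\<Sum>c\<in>Basis. (v \<bullet> c) * (\<Sum>d\<in>Basis. (v \<bullet> d) * pderiv_dir (pderiv_dir \<phi> c) d z))
      - (\<Sum>c\<in>Basis. (rfl e v \<bullet> c) * (\<Sum>d\<in>Basis. (rfl e v \<bullet> d) * pderiv_dir (pderiv_dir \<phi> c) d (rfl e z)))
      - \<epsilon> * (a * (a - 2) * norm z powr (a - 4) * (z \<bullet> v) * (z \<bullet> v) * (z \<bullet> e)
          + a * norm z powr (a - 2) * ((v \<bullet> v) * (z \<bullet> e) + 2 * (z \<bullet> v) * (v \<bullet> e))) \<le> 0)"
    if "\<phi>' = (\<lambda>y v. frechet_derivative \<phi> (at y) v)" for v \<phi>'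
  proof -
    define d where "d = \<eta> / (norm v + 1)"
    have np: "norm v + 1 > 0" using norm_ge_zero[of v] by linarith
    have d: "d > 0" using eta np by (simp add: d_def divide_pos_pos)
    have inK: "z + t *\<^sub>R v \<in> K" if "\<bar>t\<bar> < d" for t
    proof (rule ballK)
      have "\<bar>t\<bar> * norm v \<le> \<bar>t\<bar> * (norm v + 1)" by (simp add: mult_left_mono)
      also have "\<dots> < d * (norm v + 1)"
        using that by (intro mult_strict_right_mono) (use np in auto)
      also have "\<dots> = \<eta>" by (use np in \<open>simp add: d_def\<close>)
      finally show "norm (z + t *\<^sub>R v - z) < \<eta>" by simp
    qed
    define g where "g t = \<phi> (z + t *\<^sub>R v) - \<phi> (rfl e z + t *\<^sub>R rfl e v)
        - \<epsilon> * (norm (z + t *\<^sub>R v) powr a * ((z + t *\<^sub>R v) \<bullet> e) + 1)" for t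
    define G1 where "G1 t = frechet_derivative \<phi> (at (z + t *\<^sub>R v)) v
        - frechet_derivative \<phi> (at (rfl e z + t *\<^sub>R rfl e v)) (rfl e v)
        - \<epsilon> * W1 a e z v (z + t *\<^sub>R v)" for t
    have gf: "g t = f (z + t *\<^sub>R v)" for t by (simp add: g_def f_def rfl_lin)
    have D1: "(g has_real_derivative G1 t) (at t)" if "\<bar>t\<bar> < d" for t
    proof -
      have inU: "z + t *\<^sub>R v \<in> U" using inK[OF that] KU' by blast
      have inU2: "rfl e z + t *\<^sub>R rfl e v \<in> U" using Urfl[OF inU] by (simp add: rfl_lin)
      have nz: "z + t *\<^sub>R v \<noteq> 0" using inK[OF that] del by (auto simp: K_def)
      have a1: "((\<lambda>s. \<phi> (z + s *\<^sub>R v)) has_real_derivative frechet_derivative \<phi> (at (z + t *\<^sub>R v)) v) (at t)"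
        by (rule first_dir[OF diff[OF inU]])
      have a2: "((\<lambda>s. \<phi> (rfl e z + s *\<^sub>R rfl e v)) has_real_derivative frechet_derivative \<phi> (at (rfl e z + t *\<^sub>R rfl e v)) (rfl e v)) (at t)"
        by (rule first_dir[OF diff[OF inU2]])
      note a3 = w_d1[OF nz, of a e]
      show ?thesis unfolding g_def G1_def
        by (rule DERIV_diff[OF DERIV_diff[OF a1 a2] DERIV_cmult[OF a3]])
    qed
    have D2: "(G1 has_real_derivative
      (\<Sum>c\<in>Basis. (v \<bullet> c) * (\<Sum>d\<in>Basis. (v \<bullet> d) * pderiv_dir (pderiv_dir \<phi> c) d z))
      - (\<Sum>c\<in>Basis. (rfl e v \<bullet> c) * (\<Sum>d\<in>Basis. (rfl e v \<bullet> d) * pderiv_dir (pderiv_dir \<phi> c) d (rfl e z)))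
      - \<epsilon> * (a * (a - 2) * norm z powr (a - 4) * (z \<bullet> v) * (z \<bullet> v) * (z \<bullet> e)
          + a * norm z powr (a - 2) * ((v \<bullet> v) * (z \<bullet> e) + 2 * (z \<bullet> v) * (v \<bullet> e)))) (at 0)"
    proof -
      have zU2: "rfl e z \<in> U" using Urfl[OF zU] .
      note b1 = second_dir[OF U zU diff diff2[OF zU], of v]
      note b2 = second_dir[OF U zU2 diff diff2[OF zU2], of "rfl e v"]
      note b3 = w_d2[OF z0, of a e v]
      show ?thesis unfolding G1_def
        by (rule DERIV_diff[OF DERIV_diff[OF b1 b2] DERIV_cmult[OF b3]])
    qed
    have mx: "g t \<le> g 0" if "\<bar>t\<bar> < d" for t
      using zmax[OF inK[OF that]] by (simp add: gf)
    from second_deriv_max[OF d D1 D2 mx] show ?thesis unfolding that G1_def by simp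
  qed
  have zU2: "rfl e z \<in> U" using Urfl[OF zU] .
  have nrz: "norm (rfl e z) = norm z" using norm_rfl[OF e] .
  have r: "norm z > 0" using z0 by simp
  have pw: "norm z powr a = norm z powr (a - 2) * (norm z)^2"
  proof -
    have "norm z powr (a - 2) * (norm z)^2 = norm z powr (a - 2) * norm z powr 2"
      using r by (simp add: powr_realpow)
    also have "\<dots> = norm z powr ((a - 2) + 2)" by (simp only: powr_add)
    also have "\<dots> = norm z powr a" by simp
    finally show ?thesis by simp
  qed
  define P where "P = frechet_derivative \<phi> (at z) z"
  define Q where "Q = frechet_derivative \<phi> (at (rfl e z)) (rfl e z)"
  have W1z: "W1 a e z z z = (a + 1) * norm z powr a * (z \<bullet> e)"
    unfolding W1_def by (simp add: pw power2_norm_eq_inner[symmetric] algebra_simps)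
  have first: "P - Q = \<epsilon> * ((a + 1) * norm z powr a * (z \<bullet> e))"
    using conjunct1[OF dirfacts[OF refl, of z]] W1z by (simp add: P_def Q_def)
  have lz: "laplacian \<phi> z = \<gamma> * P / (norm z)^2"
    using eqn[OF zU] grad_inner[OF diff[OF zU], of z] by (simp add: P_def)
  have lrz: "laplacian \<phi> (rfl e z) = \<gamma> * Q / (norm z)^2"
    using eqn[OF zU2] grad_inner[OF diff[OF zU2], of "rfl e z"] nrz by (simp add: Q_def)
  let ?A = "\<lambda>v. (\<Sum>c\<in>Basis. (v \<bullet> c) * (\<Sum>d\<in>Basis. (v \<bullet> d) * pderiv_dir (pderiv_dir \<phi> c) d z))"
  let ?B = "\<lambda>v. (\<Sum>c\<in>Basis. (rfl e v \<bullet> c) * (\<Sum>d\<in>Basis. (rfl e v \<bullet> d) * pderiv_dir (pderiv_dir \<phi> c) d (rfl e z)))"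
  let ?W = "\<lambda>v. a * (a - 2) * norm z powr (a - 4) * (z \<bullet> v) * (z \<bullet> v) * (z \<bullet> e)
          + a * norm z powr (a - 2) * ((v \<bullet> v) * (z \<bullet> e) + 2 * (z \<bullet> v) * (v \<bullet> e))"
  have "(\<Sum>b\<in>Basis. ?A b - ?B b - \<epsilon> * ?W b) \<le> 0"
    by (rule sum_nonpos) (use dirfacts[OF refl] in blast)
  then have "(\<Sum>b\<in>Basis. ?A b) - (\<Sum>b\<in>Basis. ?B b) - \<epsilon> * (\<Sum>b\<in>Basis. ?W b) \<le> 0"
    by (simp add: sum_subtractf sum_distrib_left)
  moreover have "(\<Sum>b\<in>Basis. ?A b) = laplacian \<phi> z"
    unfolding laplacian_def by (rule sum.cong[OF refl]) (rule basis_trace)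
  moreover have "(\<Sum>b\<in>Basis. ?B b) = laplacian \<phi> (rfl e z)"
    unfolding laplacian_def by (rule trace_rfl[OF e])
  moreover have "(\<Sum>b\<in>Basis. ?W b) = a * (a + real DIM('a)) * norm z powr (a - 2) * (z \<bullet> e)"
    by (rule W2_sum[OF z0])
  ultimately have ineq: "\<gamma> * (P - Q) / (norm z)^2 - \<epsilon> * (a * (a + real DIM('a)) * norm z powr (a - 2) * (z \<bullet> e)) \<le> 0"
    using lz lrz by (simp add: diff_divide_distrib right_diff_distrib)
  have "\<gamma> * (P - Q) / (norm z)^2 = \<epsilon> * (\<gamma> * (a + 1) * norm z powr (a - 2) * (z \<bullet> e))"
    using first r by (simp add: pw field_simps power2_eq_square)
  with ineq have "\<epsilon> * (norm z powr (a - 2) * (z \<bullet> e)) * (\<gamma> * (a + 1) - a * (a + real DIM('a))) \<le> 0"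
    by (simp add: algebra_simps)
  moreover have "\<epsilon> * (norm z powr (a - 2) * (z \<bullet> e)) > 0" using eps ze r by simp
  moreover have "\<gamma> * (a + 1) - a * (a + real DIM('a)) > 0" using Qa by simp
  ultimately show False using mult_pos_pos by (metis not_le)
qed

lemma pb_mono: "x \<in> punct_ball R \<Longrightarrow> y \<noteq> 0 \<Longrightarrow> norm y \<le> norm x \<Longrightarrow> y \<in> punct_ball R"
  unfolding punct_ball_def using order.strict_trans1[of "ereal (norm y)" "ereal (norm x)" R] by auto

lemma pb_rfl: "norm e = 1 \<Longrightarrow> x \<in> punct_ball R \<Longrightarrow> rfl e x \<in> punct_ball R"
proof -
  assume "norm e = 1" "x \<in> punct_ball R"
  moreover from this have "norm (rfl e x) = norm x" by (simp add: norm_rfl)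
  ultimately show ?thesis by (simp add: punct_ball_def) (metis norm_eq_zero)
qed

lemma fd_bound:
  fixes \<phi> :: "'a::euclidean_space \<Rightarrow> real"
  assumes "\<phi> differentiable (at y)" "norm v = 1"
  shows "\<bar>frechet_derivative \<phi> (at y) v\<bar> \<le> norm (grad \<phi> y)"
  using grad_inner[OF assms(1), of v] Cauchy_Schwarz_ineq2[of v "grad \<phi> y"] assms(2) by simp

lemma psi_bound:
  fixes \<phi> :: "'a::euclidean_space \<Rightarrow> real" and e x :: 'a
  assumes diff: "\<And>y. y \<in> punct_ball R \<Longrightarrow> \<phi> differentiable (at y)"
    and bd0: "\<And>y. y \<in> punct_ball R \<Longrightarrow> norm y powr \<sigma> * \<bar>\<phi> y\<bar> \<le> C"
    and bd1: "\<And>y. y \<in> punct_ball R \<Longrightarrow> norm y powr (\<sigma> + 1) * norm (grad \<phi> y) \<le> C"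
    and sig: "\<sigma> \<ge> 0" and e: "norm e = 1" and x: "x \<in> punct_ball R" "x \<bullet> e \<ge> 0"
  shows "\<bar>\<phi> x - \<phi> (rfl e x)\<bar> \<le> (2 * C * 2 powr (\<sigma> + 1) + 4 * C) * (x \<bullet> e) / norm x powr (\<sigma> + 1)"
proof -
  define r where "r = norm x"
  have r: "r > 0" using x by (simp add: punct_ball_def r_def)
  have "0 \<le> norm x powr \<sigma> * \<bar>\<phi> x\<bar>" by simp
  then have C: "C \<ge> 0" using bd0[OF x(1)] by linarith
  have rs: "r powr (\<sigma> + 1) = r powr \<sigma> * r" using r by (simp add: powr_add)
  have rsp: "r powr \<sigma> > 0" using r by simp
  have xe_le: "x \<bullet> e \<le> r" using Cauchy_Schwarz_ineq2[of x e] e by (simp add: r_def)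
  have K0: "0 \<le> 2 * C * 2 powr (\<sigma> + 1)" using C by simp
  show ?thesis
  proof (cases "x \<bullet> e \<ge> r / 2")
    case True
    have a: "\<bar>\<phi> x\<bar> \<le> C / r powr \<sigma>" using bd0[OF x(1)] rsp by (simp add: r_def field_simps)
    have b: "\<bar>\<phi> (rfl e x)\<bar> \<le> C / r powr \<sigma>"
      using bd0[OF pb_rfl[OF e x(1)]] rsp by (simp add: r_def norm_rfl[OF e] field_simps)
    have "\<bar>\<phi> x - \<phi> (rfl e x)\<bar> \<le> 2 * C / r powr \<sigma>" using a b by simp
    also have "\<dots> = 2 * C * r / r powr (\<sigma> + 1)" using r rsp by (simp only: rs) (simp add: field_simps)
    also have "\<dots> \<le> 4 * C * (x \<bullet> e) / r powr (\<sigma> + 1)"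
      using True C r mult_left_mono[of r "2 * (x \<bullet> e)" C] by (intro divide_right_mono) (auto simp: algebra_simps)
    also have "\<dots> \<le> (2 * C * 2 powr (\<sigma> + 1) + 4 * C) * (x \<bullet> e) / r powr (\<sigma> + 1)"
      using K0 x(2) r by (intro divide_right_mono mult_right_mono) auto
    finally show ?thesis by (simp add: r_def)
  next
    case False
    show ?thesis
    proof (cases "x \<bullet> e = 0")
      case True
      then show ?thesis by (simp add: rfl_fix)
    next
      case xe0: False
      then have xe: "x \<bullet> e > 0" using x(2) by simp
      define v where "v = - e"
      define y where "y t = x + t *\<^sub>R v" for t
      have ny2: "(norm (y t))^2 = r^2 - 2 * t * (x \<bullet> e) + t^2" for t
      proof -
        have "(norm (y t))^2 = (x - t *\<^sub>R e) \<bullet> (x - t *\<^sub>R e)"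
          by (simp add: y_def v_def power2_norm_eq_inner)
        also have "\<dots> = x \<bullet> x - 2 * t * (x \<bullet> e) + t^2 * (e \<bullet> e)"
          by (simp add: inner_diff_left inner_diff_right inner_commute algebra_simps power2_eq_square)
        also have "\<dots> = r^2 - 2 * t * (x \<bullet> e) + t^2"
          using e by (simp add: r_def power2_norm_eq_inner norm_eq_1)
        finally show ?thesis .
      qed
      have yb: "r / 2 \<le> norm (y t) \<and> norm (y t) \<le> r" if "0 \<le> t" "t \<le> x \<bullet> e" for t
      proof
        have "2 * t * (x \<bullet> e) \<le> 2 * (x \<bullet> e) * (x \<bullet> e)" using mult_right_mono[OF that(2), of "x \<bullet> e"] xe by (simp add: algebra_simps)
        also have "\<dots> \<le> r^2 / 2" using False xe mult_mono[of "2 * (x \<bullet> e)" r "2 * (x \<bullet> e)" r] by (simp add: power2_eq_square algebra_simps)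
        finally have tt: "2 * t * (x \<bullet> e) \<le> r^2 / 2" .
        have "0 \<le> t^2" "0 \<le> r^2" by simp_all
        moreover have "(r / 2)^2 = r^2 / 4" by (simp add: power_divide)
        ultimately have "(norm (y t))^2 \<ge> (r / 2)^2" using ny2[of t] tt by linarith
        then show "r / 2 \<le> norm (y t)" by (rule power2_le_imp_le) simp
        have "t * t \<le> t * (x \<bullet> e)" using mult_left_mono[OF that(2) that(1)] .
        moreover have "0 \<le> t * (x \<bullet> e)" using that xe by simp
        ultimately have "t^2 \<le> 2 * t * (x \<bullet> e)" by (simp add: power2_eq_square)
        then have "(norm (y t))^2 \<le> r^2" using ny2[of t] by simp
        then show "norm (y t) \<le> r" by (rule power2_le_imp_le) (use r in simp)
      qed
      have yU: "y t \<in> punct_ball R" if "0 \<le> t" "t \<le> x \<bullet> e" for t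
      proof -
        have "norm (y t) > 0" using yb[OF that] r by linarith
        then show ?thesis using pb_mono[OF x(1), of "y t"] yb[OF that] by (simp add: r_def)
      qed
      define h where "h t = \<phi> (x + t *\<^sub>R v) - \<phi> (rfl e x + t *\<^sub>R rfl e v)" for t
      define h' where "h' t = frechet_derivative \<phi> (at (x + t *\<^sub>R v)) v
         - frechet_derivative \<phi> (at (rfl e x + t *\<^sub>R rfl e v)) (rfl e v)" for t
      have D: "(h has_real_derivative h' t) (at t)" if "0 \<le> t" "t \<le> x \<bullet> e" for t
      proof -
        have u1: "x + t *\<^sub>R v \<in> punct_ball R" using yU[OF that] by (simp add: y_def)
        have u2: "rfl e x + t *\<^sub>R rfl e v \<in> punct_ball R" using pb_rfl[OF e u1] by (simp add: rfl_lin)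
        show ?thesis unfolding h_def h'_def
          by (rule DERIV_diff[OF first_dir[OF diff[OF u1]] first_dir[OF diff[OF u2]]])
      qed
      obtain t where t: "0 < t" "t < x \<bullet> e" "h (x \<bullet> e) - h 0 = (x \<bullet> e - 0) * h' t"
        using MVT2[of 0 "x \<bullet> e" h h'] D xe by auto
      have hend: "h (x \<bullet> e) = 0"
      proof -
        have "(x + (x \<bullet> e) *\<^sub>R v) \<bullet> e = 0" using e by (simp add: v_def inner_diff_left norm_eq_1)
        then have "rfl e (x + (x \<bullet> e) *\<^sub>R v) = x + (x \<bullet> e) *\<^sub>R v" by (rule rfl_fix)
        then show ?thesis by (simp add: h_def rfl_lin)
      qed
      have h0: "h 0 = \<phi> x - \<phi> (rfl e x)" by (simp add: h_def)
      have u1: "y t \<in> punct_ball R" using yU t by simp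
      have u2: "rfl e (y t) \<in> punct_ball R" using pb_rfl[OF e u1] .
      have nv: "norm v = 1" "norm (rfl e v) = 1" using e by (auto simp: v_def norm_rfl)
      have gb: "norm (grad \<phi> w) \<le> C * 2 powr (\<sigma> + 1) / r powr (\<sigma> + 1)"
        if "w \<in> punct_ball R" "norm w \<ge> r / 2" for w
      proof -
        have "(r / 2) powr (\<sigma> + 1) \<le> norm w powr (\<sigma> + 1)"
          using that r sig by (intro powr_mono2) auto
        then have "(r / 2) powr (\<sigma> + 1) * norm (grad \<phi> w) \<le> norm w powr (\<sigma> + 1) * norm (grad \<phi> w)"
          by (rule mult_right_mono) simp
        also have "\<dots> \<le> C" using bd1[OF that(1)] .
        also have "(r / 2) powr (\<sigma> + 1) = r powr (\<sigma> + 1) / 2 powr (\<sigma> + 1)"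
          using r by (simp add: powr_divide)
        finally have "r powr (\<sigma> + 1) / 2 powr (\<sigma> + 1) * norm (grad \<phi> w) \<le> C" .
        then show ?thesis using r by (simp add: field_simps)
      qed
      have "\<bar>h' t\<bar> \<le> norm (grad \<phi> (y t)) + norm (grad \<phi> (rfl e (y t)))"
        using fd_bound[OF diff[OF u1] nv(1)] fd_bound[OF diff[OF u2] nv(2)]
        by (simp add: h'_def y_def rfl_lin)
      also have "\<dots> \<le> 2 * (C * 2 powr (\<sigma> + 1) / r powr (\<sigma> + 1))"
        using gb[OF u1] gb[OF u2] yb[of t] t norm_rfl[OF e, of "y t"] by simp
      finally have hb: "\<bar>h' t\<bar> \<le> 2 * C * 2 powr (\<sigma> + 1) / r powr (\<sigma> + 1)" by simp
      have "\<phi> x - \<phi> (rfl e x) = - ((x \<bullet> e) * h' t)" using t hend h0 by simp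
      then have "\<bar>\<phi> x - \<phi> (rfl e x)\<bar> = (x \<bullet> e) * \<bar>h' t\<bar>" using xe by (simp add: abs_mult)
      also have "\<dots> \<le> (x \<bullet> e) * (2 * C * 2 powr (\<sigma> + 1) / r powr (\<sigma> + 1))"
        using mult_left_mono[OF hb, of "x \<bullet> e"] xe by simp
      also have "\<dots> \<le> (2 * C * 2 powr (\<sigma> + 1) + 4 * C) * (x \<bullet> e) / r powr (\<sigma> + 1)"
        using C xe r by (simp add: field_simps)
      finally show ?thesis by (simp add: r_def)
    qed
  qed
qed

lemma outer_fin:
  fixes \<phi> :: "'a::euclidean_space \<Rightarrow> real"
  assumes bdry: "\<forall>y. ereal (norm y) = ereal R0 \<longrightarrow> (\<phi> \<longlongrightarrow> 0) (at y within punct_ball (ereal R0))"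
    and eps: "\<epsilon> > 0" and r0: "0 \<le> r0" "r0 < R0"
  shows "\<exists>\<rho>>r0. \<rho> < R0 \<and> (\<forall>x. norm x = \<rho> \<longrightarrow> \<bar>\<phi> x\<bar> \<le> \<epsilon>)"
proof (rule ccontr)
  assume "\<not> ?thesis"
  then have bad: "\<And>\<rho>. r0 < \<rho> \<Longrightarrow> \<rho> < R0 \<Longrightarrow> \<exists>x. norm x = \<rho> \<and> \<bar>\<phi> x\<bar> > \<epsilon>"
    by (auto simp: not_le)
  define \<rho> where "\<rho> n = R0 - (R0 - r0) / 2 * inverse (real (Suc n))" for n
  have \<rho>b: "r0 < \<rho> n \<and> \<rho> n < R0" for n
  proof -
    have "inverse (real (Suc n)) \<le> 1" "inverse (real (Suc n)) > 0" by (auto simp: field_simps)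
    moreover have "(R0 - r0) / 2 > 0" using r0 by simp
    ultimately have "(R0 - r0) / 2 * inverse (real (Suc n)) \<le> (R0 - r0) / 2"
       "(R0 - r0) / 2 * inverse (real (Suc n)) > 0"
      by (auto intro: mult_left_le)
    moreover obtain q where q: "q = (R0 - r0) / 2 * inverse (real (Suc n))" by blast
    ultimately have q1: "q \<le> (R0 - r0) / 2" "q > 0" by simp_all
    have q2: "\<rho> n = R0 - q" by (simp add: \<rho>_def q)
    show ?thesis using q1 q2 r0 by auto
  qed
  have "\<forall>n. \<exists>x. norm x = \<rho> n \<and> \<bar>\<phi> x\<bar> > \<epsilon>" using bad \<rho>b by blast
  then obtain X where X: "\<And>n. norm (X n) = \<rho> n" "\<And>n. \<bar>\<phi> (X n)\<bar> > \<epsilon>" by metis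
  have \<rho>lim: "\<rho> \<longlonglongrightarrow> R0"
  proof -
    have "(\<lambda>n. R0 - (R0 - r0) / 2 * inverse (real (Suc n))) \<longlonglongrightarrow> R0 - (R0 - r0) / 2 * 0"
      by (intro tendsto_intros LIMSEQ_inverse_real_of_nat)
    then show ?thesis unfolding \<rho>_def by simp
  qed
  have "seq_compact (cball (0::'a) R0)" by (rule compact_imp_seq_compact) simp
  moreover have "\<forall>n. X n \<in> cball 0 R0" using X \<rho>b by (auto simp: less_imp_le)
  ultimately obtain l r where l: "l \<in> cball 0 R0" "strict_mono r" "(X \<circ> r) \<longlonglongrightarrow> l"
    unfolding seq_compact_def by metis
  have "(\<lambda>n. norm ((X \<circ> r) n)) \<longlonglongrightarrow> norm l" using tendsto_norm[OF l(3)] .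
  moreover have "(\<lambda>n. norm ((X \<circ> r) n)) = \<rho> \<circ> r" using X by (auto simp: o_def)
  ultimately have "(\<rho> \<circ> r) \<longlonglongrightarrow> norm l" by simp
  moreover have "(\<rho> \<circ> r) \<longlonglongrightarrow> R0" using LIMSEQ_subseq_LIMSEQ[OF \<rho>lim l(2)] .
  ultimately have nl: "norm l = R0" using LIMSEQ_unique by blast
  have "(\<phi> \<longlongrightarrow> 0) (at l within punct_ball (ereal R0))" using bdry nl by simp
  then have "\<forall>\<^sub>F y in at l within punct_ball (ereal R0). dist (\<phi> y) 0 < \<epsilon>"
    using eps tendsto_iff by blast
  then obtain d where d: "d > 0" "\<And>y. y \<in> punct_ball (ereal R0) \<Longrightarrow> y \<noteq> l \<Longrightarrow> dist y l < d \<Longrightarrow> \<bar>\<phi> y\<bar> < \<epsilon>"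
    unfolding eventually_at by auto
  obtain n where n: "dist ((X \<circ> r) n) l < d"
    using l(3) d(1) tendsto_iff eventually_sequentially by (metis order_refl)
  have "norm (X (r n)) > 0" using X(1)[of "r n"] \<rho>b[of "r n"] r0 by simp
  then have nz: "X (r n) \<noteq> 0" by auto
  have "X (r n) \<in> punct_ball (ereal R0)" using X(1)[of "r n"] \<rho>b[of "r n"] nz by (simp add: punct_ball_def)
  moreover have "X (r n) \<noteq> l" using X(1) \<rho>b[of "r n"] nl by auto
  ultimately have "\<bar>\<phi> (X (r n))\<bar> < \<epsilon>" using d(2) n by simp
  with X(2)[of "r n"] show False by simp
qed

lemma open_pb: "open (punct_ball R :: 'a::euclidean_space set)"
proof (cases R)
  case (real r)
  have "punct_ball R = {x::'a. 0 < norm x} \<inter> {x. norm x < r}"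
    by (auto simp: punct_ball_def real)
  show ?thesis unfolding \<open>punct_ball R = _\<close> by (intro open_Int open_Collect_less continuous_intros)
next
  case PInf
  have "punct_ball R = {x::'a. 0 < norm x}" by (auto simp: punct_ball_def PInf)
  show ?thesis unfolding \<open>punct_ball R = _\<close> by (intro open_Collect_less continuous_intros)
next
  case MInf
  then show ?thesis by (simp add: punct_ball_def)
qed

lemma rfl_neg: "rfl (-e) x = rfl e x"
  by (simp add: rfl_def)

lemma radial_rfl:
  fixes x y :: "'a::euclidean_space"
  assumes "x \<noteq> y" "norm x = norm y"
  shows "\<exists>e. norm e = 1 \<and> x \<bullet> e > 0 \<and> rfl e x = y"
proof -
  define d where "d = norm (x - y)"
  have d: "d > 0" using assms by (simp add: d_def)
  define e where "e = (1 / d) *\<^sub>R (x - y)"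
  have ne: "norm e = 1" using d by (simp add: e_def d_def)
  have "d^2 = x \<bullet> x - 2 * (x \<bullet> y) + y \<bullet> y"
    by (simp add: d_def power2_norm_eq_inner inner_diff_left inner_diff_right inner_commute)
  moreover have "x \<bullet> x = y \<bullet> y" using assms(2) by (simp add: power2_norm_eq_inner[symmetric])
  ultimately have xy: "x \<bullet> (x - y) = d^2 / 2" by (simp add: inner_diff_right)
  have xe: "x \<bullet> e = d / 2" using d xy by (simp add: e_def power2_eq_square)
  have "rfl e x = x - d *\<^sub>R e" by (simp add: rfl_def xe)
  also have "\<dots> = y" using d by (simp add: e_def)
  finally show ?thesis using ne xe d by auto
qed

lemma integral_const_ball:
  "integral (ball (0::'a::euclidean_space) 1) (\<lambda>x. c) = c * measure lborel (ball (0::'a) 1)"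
proof -
  have "integral (ball (0::'a) 1) (\<lambda>x. c * 1) = c * integral (ball (0::'a) 1) (\<lambda>x. 1)"
    by (rule integral_mult_right)
  also have "integral (ball (0::'a) 1) (\<lambda>x. 1::real) = measure lebesgue (ball (0::'a) 1)"
    by (rule lmeasure_integral[symmetric]) simp
  also have "measure lebesgue (ball (0::'a) 1) = measure lborel (ball (0::'a) 1)"
    by (simp add: measure_completion)
  finally show ?thesis by simp
qed

lemma Q_neg:
  fixes s u N k \<gamma> :: real
  assumes s: "0 < s" "s < 1" and u: "u = s * (N - 1) - 1" "u > 0"
    and k: "k = 1 + s \<or> k = - (1 + s)"
    and g: "\<gamma> = k / (s / u)"
  shows "(-1/s) * ((-1/s) + N) - \<gamma> * ((-1/s) + 1) < 0"
proof -
  have "\<gamma> = k * u / s" using g by simp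
  then have gs: "\<gamma> * s = k * u" using s by simp
  have "s^2 * ((-1/s) * ((-1/s) + N) - \<gamma> * ((-1/s) + 1)) = 1 - N * s + (\<gamma> * s) * (1 - s)"
    using s by (simp add: field_simps power2_eq_square)
  also have "\<dots> = 1 - N * s + k * u * (1 - s)" by (simp add: gs)
  also have "\<dots> < 0"
  proof -
    have Ns: "N * s - 1 = u + s" using u by (simp add: algebra_simps)
    have "(1 + s) * u * (1 - s) < u + s"
    proof -
      have "(1 + s) * u * (1 - s) = u - s^2 * u" by (simp add: algebra_simps power2_eq_square)
      moreover have "s^2 * u \<ge> 0" using u by simp
      ultimately show ?thesis using s by linarith
    qed
    moreover have "-(1 + s) * u * (1 - s) \<le> 0"
    proof -
      have "(1 + s) * u * (1 - s) \<ge> 0" using s u(2) by (intro mult_nonneg_nonneg) auto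
      moreover have "-(1 + s) * u * (1 - s) = - ((1 + s) * u * (1 - s))" by (simp add: algebra_simps)
      ultimately show ?thesis by linarith
    qed
    ultimately show ?thesis using k
    proof (elim disjE)
      assume "(1 + s) * u * (1 - s) < u + s" "k = 1 + s"
      then show ?thesis using Ns by simp
    next
      assume "- (1 + s) * u * (1 - s) \<le> 0" "k = - (1 + s)"
      then show ?thesis using Ns s u(2) by simp
    qed
  qed
  finally show ?thesis using s by (simp add: mult_less_0_iff)
qed

lemma exists_a:
  fixes c N \<gamma> :: real
  assumes "c * (c + N) - \<gamma> * (c + 1) < 0"
  shows "\<exists>a<c. a * (a + N) - \<gamma> * (a + 1) < 0"
proof -
  have "((\<lambda>a. a * (a + N) - \<gamma> * (a + 1)) \<longlongrightarrow> c * (c + N) - \<gamma> * (c + 1)) (at_left c)"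
    by (intro tendsto_intros)
  then have "\<forall>\<^sub>F a in at_left c. a * (a + N) - \<gamma> * (a + 1) < 0"
    using assms by (rule order_tendstoD)
  then obtain b where b: "b < c" "\<And>y. b < y \<Longrightarrow> y < c \<Longrightarrow> y * (y + N) - \<gamma> * (y + 1) < 0"
    by (auto simp: eventually_at_left_field)
  show ?thesis using b(1) b(2)[of "(b + c) / 2"] by (intro exI[of _ "(b + c) / 2"]) auto
qed

theorem lemma2p3:
  fixes \<phi> :: "'a::euclidean_space \<Rightarrow> real"
    and p \<kappa> \<xi> \<beta> \<sigma> :: real and R :: ereal
  assumes N3: "DIM('a) \<ge> 3"
    and p_lo: "real DIM('a) / (real DIM('a) - 1) < p" and p_hi: "p < 2"
    and xi_def: "\<xi> = (p - 1) * (real DIM('a) - 1)"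
    and beta_def: "\<beta> = (p - 1) / (\<xi> - 1)"
    and sigma_def: "\<sigma> = (2 - p) / (p - 1)"
    and R_pos: "0 < R"
    and kappa: "\<kappa> = p \<or> \<kappa> = - p"
    and C2: "C2_on (punct_ball R) \<phi>"
    and X1: "X1_space \<sigma> R \<phi>"
    and eq: "\<forall>x\<in>punct_ball R.
               - laplacian \<phi> x + \<kappa> * (x \<bullet> grad \<phi> x) / (\<beta> * (norm x)\<^sup>2) = 0"
  shows "\<forall>x\<in>punct_ball R. \<phi> x = 0"
proof -
  define N where "N = real DIM('a)"
  define s where "s = p - 1"
  define u where "u = \<xi> - 1"
  define \<gamma> where "\<gamma> = \<kappa> / \<beta>"
  define U where "U = (punct_ball R :: 'a set)"
  have N: "N \<ge> 3" using N3 by (simp add: N_def)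
  have "N / (N - 1) < p" using p_lo by (simp add: N_def)
  then have "N < p * (N - 1)" using N by (simp add: divide_less_eq)
  then have u: "u > 0" "u = s * (N - 1) - 1"
    by (auto simp: u_def xi_def s_def N_def algebra_simps)
  have s: "0 < s" "s < 1"
  proof -
    have "s * (N - 1) > 1" using u by simp
    then show "0 < s" using N by (smt (verit) mult_nonpos_nonneg)
    show "s < 1" using p_hi by (simp add: s_def)
  qed
  have sig: "\<sigma> = 1 / s - 1" using s by (simp add: sigma_def s_def field_simps)
  have sig0: "\<sigma> > 0" using s by (simp add: sig field_simps)
  have beta: "\<beta> = s / u" by (simp add: beta_def s_def u_def)
  have kap: "\<kappa> = 1 + s \<or> \<kappa> = - (1 + s)" using kappa by (auto simp: s_def)
  have "(-1/s) * ((-1/s) + N) - \<gamma> * ((-1/s) + 1) < 0"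
    by (rule Q_neg[OF s u(2) u(1) kap]) (simp add: \<gamma>_def beta)
  then obtain a where a: "a < -1/s" "a * (a + N) - \<gamma> * (a + 1) < 0"
    using exists_a by blast
  have ac: "a + \<sigma> + 1 < 0" using a(1) by (simp add: sig)
  have oU: "open U" by (simp add: U_def open_pb)
  have diff: "\<And>x. x \<in> U \<Longrightarrow> \<phi> differentiable (at x)"
    and diff2: "\<And>x b. x \<in> U \<Longrightarrow> b \<in> Basis \<Longrightarrow> pderiv_dir \<phi> b differentiable (at x)"
    using C2 by (auto simp: C2_on_def U_def)
  have eqn: "laplacian \<phi> x = \<gamma> * (x \<bullet> grad \<phi> x) / (norm x)^2" if "x \<in> U" for x
  proof -
    have "laplacian \<phi> x = \<kappa> * (x \<bullet> grad \<phi> x) / (\<beta> * (norm x)\<^sup>2)"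
      using eq that by (simp add: U_def)
    then show ?thesis by (simp add: \<gamma>_def)
  qed
  obtain C where Cb: "\<And>x. x \<in> U \<Longrightarrow> norm x powr \<sigma> * \<bar>\<phi> x\<bar> + norm x powr (\<sigma> + 1) * norm (grad \<phi> x) \<le> C"
    using X1 by (auto simp: X1_space_def X_space_def U_def)
  have bd0: "norm x powr \<sigma> * \<bar>\<phi> x\<bar> \<le> C" if "x \<in> U" for x
    using Cb[OF that] by (smt (verit) mult_nonneg_nonneg norm_ge_zero powr_ge_zero)
  have bd1: "norm x powr (\<sigma> + 1) * norm (grad \<phi> x) \<le> C" if "x \<in> U" for x
    using Cb[OF that] by (smt (verit) mult_nonneg_nonneg abs_ge_zero powr_ge_zero)
  have bdry: "R \<noteq> \<infinity> \<Longrightarrow> \<forall>y. ereal (norm y) = R \<longrightarrow> (\<phi> \<longlongrightarrow> 0) (at y within punct_ball R)"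
    using X1 by (auto simp: X1_space_def X_space_def)
  have avg: "zero_sph_avg R \<phi>" using X1 by (simp add: X1_space_def)
  have Urfl: "\<And>x e. norm e = 1 \<Longrightarrow> x \<in> U \<Longrightarrow> rfl e x \<in> U" using pb_rfl by (simp add: U_def)
  have outer: "\<exists>\<rho>>r0. ereal \<rho> < R \<and> (\<forall>x. norm x = \<rho> \<longrightarrow> \<bar>\<phi> x\<bar> \<le> \<epsilon>)"
    if ep: "\<epsilon> > 0" and r0p: "0 \<le> r0" and r0R: "ereal r0 < R" for \<epsilon> r0
  proof (cases R)
    case (real R0)
    have "r0 < R0" using r0R real by simp
    moreover have "\<forall>y. ereal (norm y) = ereal R0 \<longrightarrow> (\<phi> \<longlongrightarrow> 0) (at y within punct_ball (ereal R0))"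
      using bdry real by simp
    ultimately obtain \<rho> where "\<rho> > r0" "\<rho> < R0" "\<forall>x. norm x = \<rho> \<longrightarrow> \<bar>\<phi> x\<bar> \<le> \<epsilon>"
      using outer_fin[of R0 \<phi> \<epsilon> r0] ep r0p by blast
    then show ?thesis using real by auto
  next
    case PInf
    define M where "M = \<bar>C\<bar> / \<epsilon> + 1"
    have M: "M > 0" using ep by (simp add: M_def add_nonneg_pos)
    define \<rho> where "\<rho> = max (r0 + 1) (M powr (1 / \<sigma>))"
    have \<rho>0: "\<rho> > 0" "\<rho> > r0" using r0p by (auto simp: \<rho>_def)
    have "M = (M powr (1 / \<sigma>)) powr \<sigma>" using sig0 M by (simp add: powr_powr)
    also have "\<dots> \<le> \<rho> powr \<sigma>" using sig0 M by (intro powr_mono2) (auto simp: \<rho>_def)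
    finally have M\<rho>: "M \<le> \<rho> powr \<sigma>" .
    have "\<bar>\<phi> x\<bar> \<le> \<epsilon>" if nx: "norm x = \<rho>" for x
    proof -
      have "x \<in> U" using nx \<rho>0 PInf by (auto simp: U_def punct_ball_def)
      then have "\<rho> powr \<sigma> * \<bar>\<phi> x\<bar> \<le> C" using bd0 nx by blast
      moreover have "M * \<bar>\<phi> x\<bar> \<le> \<rho> powr \<sigma> * \<bar>\<phi> x\<bar>"
        using mult_right_mono[OF M\<rho> abs_ge_zero] .
      ultimately have m2: "M * \<bar>\<phi> x\<bar> \<le> \<bar>C\<bar>" by linarith
      show ?thesis
      proof (rule ccontr)
        assume "\<not> \<bar>\<phi> x\<bar> \<le> \<epsilon>"
        then have "M * \<epsilon> < M * \<bar>\<phi> x\<bar>" using M by (simp add: mult_strict_left_mono)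
        moreover have "M * \<epsilon> = \<bar>C\<bar> + \<epsilon>" using ep by (simp add: M_def field_simps)
        ultimately show False using m2 ep by linarith
      qed
    qed
    then show ?thesis using \<rho>0 PInf by auto
  next
    case MInf
    then show ?thesis using R_pos by simp
  qed
  have half: "\<phi> x - \<phi> (rfl e x) \<le> 0" if e: "norm e = 1" and x: "x \<in> U" "0 \<le> x \<bullet> e" for e x
  proof -
    define W where "W = norm x powr a * (x \<bullet> e) + 1"
    have W: "W \<ge> 1" using x(2) by (simp add: W_def)
    have xn: "norm x > 0" using x(1) by (simp add: U_def punct_ball_def)
    have C0: "C \<ge> 0"
    proof -
      have "0 \<le> norm x powr \<sigma> * \<bar>\<phi> x\<bar>" by simp
      then show ?thesis using bd0[OF x(1)] by linarith
    qed
    define K0 where "K0 = 2 * C * 2 powr (\<sigma> + 1) + 4 * C"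
    have K0: "K0 \<ge> 0" using C0 by (simp add: K0_def)
    have main: "\<phi> x - \<phi> (rfl e x) \<le> \<epsilon> * W" if ep: "\<epsilon> > 0" for \<epsilon>
    proof -
      define c where "c = a + \<sigma> + 1"
      have c: "c < 0" using ac by (simp add: c_def)
      define M where "M = K0 / \<epsilon> + 1"
      have M: "M > 0" "\<epsilon> * M > K0" using K0 ep by (simp_all add: M_def add_nonneg_pos field_simps)
      define \<delta> where "\<delta> = min (norm x) (M powr (1 / c))"
      have \<delta>: "\<delta> > 0" "\<delta> \<le> norm x" using xn M by (auto simp: \<delta>_def)
      have "M = (M powr (1 / c)) powr c" using c M by (simp add: powr_powr)
      also have "\<dots> \<le> \<delta> powr c" using c \<delta> by (intro powr_mono2') (auto simp: \<delta>_def)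
      finally have M\<delta>: "M \<le> \<delta> powr c" .
      have dpa: "\<delta> powr a = \<delta> powr c / \<delta> powr (\<sigma> + 1)"
        using \<delta> by (simp add: c_def powr_diff[symmetric])
      have Kd: "K0 / \<delta> powr (\<sigma> + 1) \<le> \<epsilon> * \<delta> powr a"
      proof -
        have "K0 \<le> \<epsilon> * \<delta> powr c" using M(2) mult_left_mono[OF M\<delta>, of \<epsilon>] ep by linarith
        then show ?thesis using \<delta> by (simp add: dpa divide_right_mono)
      qed
      have inner_bd: "\<phi> y - \<phi> (rfl e y) \<le> \<epsilon> * (norm y powr a * (y \<bullet> e))"
        if y: "norm y = \<delta>" "0 \<le> y \<bullet> e" for y
      proof -
        have "y \<noteq> 0" using y \<delta> by auto
        then have yU: "y \<in> punct_ball R"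
          using pb_mono[of x R y] x(1) y \<delta> by (simp add: U_def)
        have "\<bar>\<phi> y - \<phi> (rfl e y)\<bar> \<le> K0 * (y \<bullet> e) / norm y powr (\<sigma> + 1)"
          unfolding K0_def
          by (rule psi_bound[OF _ _ _ _ e yU y(2)])
             (use diff bd0 bd1 sig0 in \<open>auto simp: U_def\<close>)
        also have "\<dots> = (K0 / \<delta> powr (\<sigma> + 1)) * (y \<bullet> e)" using y by simp
        also have "\<dots> \<le> (\<epsilon> * \<delta> powr a) * (y \<bullet> e)" using Kd y(2) by (rule mult_right_mono)
        finally show ?thesis using y by (simp add: mult.assoc)
      qed
      obtain \<rho> where \<rho>: "\<rho> > norm x" "ereal \<rho> < R" "\<And>y. norm y = \<rho> \<Longrightarrow> \<bar>\<phi> y\<bar> \<le> \<epsilon> / 2"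
        using outer[of "\<epsilon> / 2" "norm x"] ep x(1) by (auto simp: U_def punct_ball_def)
      have outer_bd: "\<phi> y - \<phi> (rfl e y) \<le> \<epsilon>" if "norm y = \<rho>" "0 \<le> y \<bullet> e" for y
        using \<rho>(3)[of y] \<rho>(3)[of "rfl e y"] that norm_rfl[OF e, of y] by linarith
      have KU: "{y. \<delta> \<le> norm y \<and> norm y \<le> \<rho> \<and> 0 \<le> y \<bullet> e} \<subseteq> U"
      proof
        fix y assume "y \<in> {y. \<delta> \<le> norm y \<and> norm y \<le> \<rho> \<and> 0 \<le> y \<bullet> e}"
        then have "0 < norm y" "ereal (norm y) < R" using \<delta> \<rho>(2) order.strict_trans1[of "ereal (norm y)" "ereal \<rho>" R]
          by auto
        then show "y \<in> U" by (simp add: U_def punct_ball_def)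
      qed
      have Qa: "a * (a + real DIM('a)) - \<gamma> * (a + 1) < 0" using a(2) by (simp add: N_def)
      show ?thesis unfolding W_def
        by (rule core[OF oU diff diff2 eqn Urfl[OF e] e ep \<delta>(1) KU Qa inner_bd outer_bd])
           (use \<delta> \<rho> x in auto)
    qed
    show ?thesis
    proof (rule ccontr)
      assume "\<not> ?thesis"
      then have pos: "\<phi> x - \<phi> (rfl e x) > 0" by simp
      have "\<phi> x - \<phi> (rfl e x) \<le> ((\<phi> x - \<phi> (rfl e x)) / (2 * W)) * W"
        using main[of "(\<phi> x - \<phi> (rfl e x)) / (2 * W)"] pos W by simp
      also have "\<dots> = (\<phi> x - \<phi> (rfl e x)) / 2" using W by simp
      finally show False using pos by simp
    qed
  qed
  have symm: "\<phi> (rfl e x) = \<phi> x" if e: "norm e = 1" and x: "x \<in> U" "0 \<le> x \<bullet> e" for e x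
  proof -
    have "norm (-e) = 1" using e by simp
    moreover have "rfl e x \<in> U" using Urfl[OF e x(1)] .
    moreover have "0 \<le> rfl e x \<bullet> (-e)" using x(2) rfl_e[OF e, of x] by simp
    ultimately have "\<phi> (rfl e x) - \<phi> (rfl (-e) (rfl e x)) \<le> 0" using half by blast
    then have "\<phi> (rfl e x) \<le> \<phi> x" by (simp add: rfl_neg rfl_rfl[OF e])
    moreover have "\<phi> x \<le> \<phi> (rfl e x)" using half[OF e x] by simp
    ultimately show ?thesis by simp
  qed
  have radial: "\<phi> x = \<phi> y" if xU: "x \<in> U" and nxy: "norm x = norm y" for x y
  proof (cases "x = y")
    case False
    then obtain e where e: "norm e = 1" "x \<bullet> e > 0" "rfl e x = y" using radial_rfl nxy by blast
    then show ?thesis using symm[OF e(1) xU] by simp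
  qed simp
  obtain b0 :: 'a where b0: "b0 \<in> Basis" using nonempty_Basis by blast
  have b00: "b0 \<noteq> 0" "norm b0 = 1" using b0 by (auto simp: nonzero_Basis)
  show ?thesis
  proof
    fix x :: 'a assume xU: "x \<in> punct_ball R"
    define r where "r = norm x"
    have r: "0 < r" "ereal r < R" using xU by (auto simp: punct_ball_def r_def)
    have rb: "r *\<^sub>R b0 \<in> U" using r b0 b00 by (simp add: U_def punct_ball_def)
    have "integral (ball 0 1) (\<lambda>y. \<phi> (r *\<^sub>R (y /\<^sub>R norm y))) = 0"
      using avg r by (simp add: zero_sph_avg_def)
    moreover have "integral (ball 0 1) (\<lambda>y. \<phi> (r *\<^sub>R (y /\<^sub>R norm y))) = integral (ball (0::'a) 1) (\<lambda>y. \<phi> (r *\<^sub>R b0))"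
    proof (rule integral_spike[of "{0}"])
      show "negligible {0::'a}" by simp
      fix y :: 'a assume "y \<in> ball 0 1 - {0}"
      then have "y \<noteq> 0" by simp
      then have "norm (r *\<^sub>R (y /\<^sub>R norm y)) = norm (r *\<^sub>R b0)" using r b0 b00 by simp
      then show "\<phi> (r *\<^sub>R b0) = \<phi> (r *\<^sub>R (y /\<^sub>R norm y))" using radial[OF rb] by simp
    qed
    moreover have "measure lborel (ball (0::'a) 1) > 0" using content_ball_pos[of 1 "0::'a"] by simp
    ultimately have "\<phi> (r *\<^sub>R b0) = 0" using integral_const_ball[of "\<phi> (r *\<^sub>R b0)", where 'a='a] by simp
    moreover have "\<phi> x = \<phi> (r *\<^sub>R b0)" using radial[of x "r *\<^sub>R b0"] xU r b0 b00 by (simp add: U_def r_def)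
    ultimately show "\<phi> x = 0" by simp
  qed
qed

end
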